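(* Let $N,M,G,H$ be finitely generated groups and let $\alpha\colon N^{(G)}\to M^{(H)}$ and $\beta\colon G\to H$ be maps. Suppose there is $Q\ge0$ such that for all $c_1,c_2\in N^{(G)}$ with $\mathrm{supp}(c_1^{-1}c_2)\subset\{p\}$ for some $p\in G$, one has $\mathrm{supp}(\alpha(c_1)^{-1}\alpha(c_2))\subset B_H(\beta(p),Q)$. Then for every finite subset $A\subset G$ and every $c\in N^{(G)}$, $\alpha(c\,\mathcal L(A))\subset\alpha(c)\,\mathcal L(\beta(A)^{+Q})$.
   Context: Groups carry word metrics from finite generating sets; $B_H(x,r)$ is the closed ball. $N^{(G)}$ is the group of finitely supported maps $G\to N$ with pointwise multiplication; $\mathrm{supp}(c)=\{g:c(g)\ne1_N\}$. For $A\subset G$, $\mathcal L(A)$ is the subgroup of $N^{(G)}$ of colourings supported in $A$ (similarly in $M^{(H)}$). $A^{+Q}$ is the closed $Q$-neighbourhood of $A$. *)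

theory Defs
  imports Complex_Main "HOL-Algebra.Algebra"
begin

definition fin_gen_set :: "('a, 'b) monoid_scheme \<Rightarrow> 'a set \<Rightarrow> bool" where
  "fin_gen_set G S \<longleftrightarrow> finite S \<and> S \<subseteq> carrier G \<and> generate G S = carrier G"

definition finitely_generated :: "('a, 'b) monoid_scheme \<Rightarrow> bool" where
  "finitely_generated G \<longleftrightarrow> (\<exists>S. fin_gen_set G S)"

definition word_length :: "('a, 'b) monoid_scheme \<Rightarrow> 'a set \<Rightarrow> 'a \<Rightarrow> nat" where
  "word_length G S g = (LEAST n. \<exists>ws. length ws = n \<and>
      set ws \<subseteq> S \<union> m_inv G ` S \<and> foldr (\<otimes>\<^bsub>G\<^esub>) ws \<one>\<^bsub>G\<^esub> = g)"

definition word_dist :: "('a, 'b) monoid_scheme \<Rightarrow> 'a set \<Rightarrow> 'a \<Rightarrow> 'a \<Rightarrow> nat" where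
  "word_dist G S x y = word_length G S (inv\<^bsub>G\<^esub> x \<otimes>\<^bsub>G\<^esub> y)"

definition wball :: "('a, 'b) monoid_scheme \<Rightarrow> 'a set \<Rightarrow> 'a \<Rightarrow> real \<Rightarrow> 'a set" where
  "wball G S x r = {y \<in> carrier G. real (word_dist G S x y) \<le> r}"

definition wnbhd :: "('a, 'b) monoid_scheme \<Rightarrow> 'a set \<Rightarrow> 'a set \<Rightarrow> real \<Rightarrow> 'a set" where
  "wnbhd G S A r = {y \<in> carrier G. \<exists>a\<in>A. real (word_dist G S a y) \<le> r}"

definition csupp :: "('n, 'c) monoid_scheme \<Rightarrow> ('g, 'd) monoid_scheme \<Rightarrow> ('g \<Rightarrow> 'n) \<Rightarrow> 'g set" where
  "csupp N G c = {g \<in> carrier G. c g \<noteq> \<one>\<^bsub>N\<^esub>}"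

definition lamp :: "('n, 'c) monoid_scheme \<Rightarrow> ('g, 'd) monoid_scheme \<Rightarrow> ('g \<Rightarrow> 'n) monoid" where
  "lamp N G = \<lparr> carrier = {c. (\<forall>g\<in>carrier G. c g \<in> carrier N)
                         \<and> (\<forall>g. g \<notin> carrier G \<longrightarrow> c g = \<one>\<^bsub>N\<^esub>)
                         \<and> finite (csupp N G c)},
               monoid.mult = (\<lambda>c1 c2 g. c1 g \<otimes>\<^bsub>N\<^esub> c2 g),
               one = (\<lambda>g. \<one>\<^bsub>N\<^esub>) \<rparr>"

definition lampL :: "('n, 'c) monoid_scheme \<Rightarrow> ('g, 'd) monoid_scheme \<Rightarrow> 'g set \<Rightarrow> ('g \<Rightarrow> 'n) set" where
  "lampL N G A = {c \<in> carrier (lamp N G). csupp N G c \<subseteq> A}"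

end

theory Submission
  imports Defs
begin


lemma lamp_carrier_iff:
  "c \<in> carrier (lamp N G) \<longleftrightarrow> (\<forall>g\<in>carrier G. c g \<in> carrier N)
      \<and> (\<forall>g. g \<notin> carrier G \<longrightarrow> c g = \<one>\<^bsub>N\<^esub>) \<and> finite (csupp N G c)"
  by (simp add: lamp_def)

lemma lamp_mult: "c \<otimes>\<^bsub>lamp N G\<^esub> d = (\<lambda>g. c g \<otimes>\<^bsub>N\<^esub> d g)"
  by (simp add: lamp_def)

lemma lamp_one: "\<one>\<^bsub>lamp N G\<^esub> = (\<lambda>g. \<one>\<^bsub>N\<^esub>)"
  by (simp add: lamp_def)

lemma lamp_mult_closed:
  assumes "group N" "c \<in> carrier (lamp N G)" "d \<in> carrier (lamp N G)"
  shows "(\<lambda>g. c g \<otimes>\<^bsub>N\<^esub> d g) \<in> carrier (lamp N G)"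
proof -
  interpret N: group N by fact
  have "csupp N G (\<lambda>g. c g \<otimes>\<^bsub>N\<^esub> d g) \<subseteq> csupp N G c \<union> csupp N G d"
    using assms unfolding csupp_def lamp_carrier_iff by auto
  then show ?thesis using assms unfolding lamp_carrier_iff by (auto intro: finite_subset)
qed

lemma lamp_group:
  assumes "group N" shows "group (lamp N G)"
proof -
  interpret N: group N by fact
  show ?thesis
  proof (rule groupI)
    fix x y assume "x \<in> carrier (lamp N G)" "y \<in> carrier (lamp N G)"
    then show "x \<otimes>\<^bsub>lamp N G\<^esub> y \<in> carrier (lamp N G)"
      using lamp_mult_closed[OF assms] by (simp add: lamp_mult)
  next
    show "\<one>\<^bsub>lamp N G\<^esub> \<in> carrier (lamp N G)"
      by (simp add: lamp_one lamp_carrier_iff csupp_def)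
  next
    fix x y z assume "x \<in> carrier (lamp N G)" "y \<in> carrier (lamp N G)" "z \<in> carrier (lamp N G)"
    then show "x \<otimes>\<^bsub>lamp N G\<^esub> y \<otimes>\<^bsub>lamp N G\<^esub> z = x \<otimes>\<^bsub>lamp N G\<^esub> (y \<otimes>\<^bsub>lamp N G\<^esub> z)"
    proof -
      have "\<And>g. x g \<otimes>\<^bsub>N\<^esub> y g \<otimes>\<^bsub>N\<^esub> z g = x g \<otimes>\<^bsub>N\<^esub> (y g \<otimes>\<^bsub>N\<^esub> z g)"
      proof -
        fix g show "x g \<otimes>\<^bsub>N\<^esub> y g \<otimes>\<^bsub>N\<^esub> z g = x g \<otimes>\<^bsub>N\<^esub> (y g \<otimes>\<^bsub>N\<^esub> z g)"
          using \<open>x \<in> _\<close> \<open>y \<in> _\<close> \<open>z \<in> _\<close> unfolding lamp_carrier_iff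
          by (cases "g \<in> carrier G") (auto simp: N.m_assoc)
      qed
      then show ?thesis unfolding lamp_mult by simp
    qed
  next
    fix x assume "x \<in> carrier (lamp N G)"
    then show "\<one>\<^bsub>lamp N G\<^esub> \<otimes>\<^bsub>lamp N G\<^esub> x = x"
      unfolding lamp_mult lamp_one lamp_carrier_iff
      by (intro ext, metis N.l_one N.one_closed)
  next
    fix x assume x: "x \<in> carrier (lamp N G)"
    have "(\<lambda>g. inv\<^bsub>N\<^esub> x g) \<in> carrier (lamp N G)"
    proof -
      have "csupp N G (\<lambda>g. inv\<^bsub>N\<^esub> x g) = csupp N G x"
        using x unfolding csupp_def lamp_carrier_iff
        by (auto simp: N.inv_eq_1_iff)
      then show ?thesis using x unfolding lamp_carrier_iff by auto
    qed
    moreover have "(\<lambda>g. inv\<^bsub>N\<^esub> x g) \<otimes>\<^bsub>lamp N G\<^esub> x = \<one>\<^bsub>lamp N G\<^esub>"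
      unfolding lamp_mult lamp_one
    proof (rule ext)
      fix g show "inv\<^bsub>N\<^esub> x g \<otimes>\<^bsub>N\<^esub> x g = \<one>\<^bsub>N\<^esub>"
        using x unfolding lamp_carrier_iff by (cases "g \<in> carrier G") auto
    qed
    ultimately show "\<exists>y\<in>carrier (lamp N G). y \<otimes>\<^bsub>lamp N G\<^esub> x = \<one>\<^bsub>lamp N G\<^esub>" by blast
  qed
qed

lemma lamp_csupp_inv_mult:
  assumes "group N" "c \<in> carrier (lamp N G)" "d \<in> carrier (lamp N G)"
  shows "csupp N G (inv\<^bsub>lamp N G\<^esub> c \<otimes>\<^bsub>lamp N G\<^esub> d) = {g \<in> carrier G. c g \<noteq> d g}"
proof -
  interpret N: group N by fact
  interpret L: group "lamp N G" by (rule lamp_group[OF assms(1)])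
  have ic: "inv\<^bsub>lamp N G\<^esub> c \<in> carrier (lamp N G)" using assms by simp
  have "\<one>\<^bsub>lamp N G\<^esub> = inv\<^bsub>lamp N G\<^esub> c \<otimes>\<^bsub>lamp N G\<^esub> c" using assms by simp
  then have e: "\<And>g. (inv\<^bsub>lamp N G\<^esub> c) g \<otimes>\<^bsub>N\<^esub> c g = \<one>\<^bsub>N\<^esub>"
    by (metis lamp_mult lamp_one)
  have "\<And>g. g \<in> carrier G \<Longrightarrow> (inv\<^bsub>lamp N G\<^esub> c) g = inv\<^bsub>N\<^esub> c g"
    using e ic assms unfolding lamp_carrier_iff by (metis N.inv_equality)
  then show ?thesis using assms unfolding csupp_def lamp_mult lamp_carrier_iff
    by (auto simp: N.inv_solve_left')
qed

lemma key:
  fixes N :: "('n, 'c) monoid_scheme" and G :: "('g, 'd) monoid_scheme"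
    and \<alpha> :: "('g \<Rightarrow> 'n) \<Rightarrow> ('h \<Rightarrow> 'm)" and B :: "'g \<Rightarrow> 'h set"
  assumes "finite F"
    and al: "\<alpha> \<in> carrier (lamp N G) \<rightarrow> carrier (lamp M H)"
    and hyp: "\<And>c1 c2 p. c1 \<in> carrier (lamp N G) \<Longrightarrow> c2 \<in> carrier (lamp N G) \<Longrightarrow> p \<in> carrier G \<Longrightarrow>
           {g \<in> carrier G. c1 g \<noteq> c2 g} \<subseteq> {p} \<Longrightarrow>
           {h \<in> carrier H. \<alpha> c1 h \<noteq> \<alpha> c2 h} \<subseteq> B p"
  shows "F \<subseteq> carrier G \<Longrightarrow> c \<in> carrier (lamp N G) \<Longrightarrow> d \<in> carrier (lamp N G) \<Longrightarrow>
     {g \<in> carrier G. c g \<noteq> d g} \<subseteq> F \<Longrightarrow> {h \<in> carrier H. \<alpha> c h \<noteq> \<alpha> d h} \<subseteq> (\<Union>p\<in>F. B p)"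
  using assms(1)
proof (induction F arbitrary: c d rule: finite_induct)
  case empty
  have "c = d"
  proof (rule ext)
    fix g show "c g = d g"
      using empty unfolding lamp_carrier_iff by (cases "g \<in> carrier G") auto
  qed
  then show ?case by simp
next
  case (insert p F)
  define e where "e = d(p := c p)"
  have pc: "p \<in> carrier G" using insert by auto
  have ecar: "e \<in> carrier (lamp N G)"
  proof -
    have "csupp N G e \<subseteq> csupp N G d \<union> {p}" unfolding csupp_def e_def by auto
    moreover have "finite (csupp N G d \<union> {p})" using insert(6) unfolding lamp_carrier_iff by simp
    ultimately have "finite (csupp N G e)" by (rule finite_subset)
    then show ?thesis using insert(5,6) pc unfolding lamp_carrier_iff e_def by simp
  qed
  have 1: "{g \<in> carrier G. c g \<noteq> e g} \<subseteq> F" using insert(7) unfolding e_def by auto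
  have 2: "{g \<in> carrier G. e g \<noteq> d g} \<subseteq> {p}" unfolding e_def by auto
  have a1: "{h \<in> carrier H. \<alpha> c h \<noteq> \<alpha> e h} \<subseteq> (\<Union>p\<in>F. B p)"
    using insert.IH[OF _ insert(5) ecar 1] insert(4) by auto
  have a2: "{h \<in> carrier H. \<alpha> e h \<noteq> \<alpha> d h} \<subseteq> B p"
    using hyp[OF ecar insert(6) pc 2] .
  show ?case
  proof
    fix h assume h: "h \<in> {h \<in> carrier H. \<alpha> c h \<noteq> \<alpha> d h}"
    show "h \<in> (\<Union>p\<in>insert p F. B p)"
    proof (cases "\<alpha> c h = \<alpha> e h")
      case True
      then have "h \<in> B p" using h a2 by auto
      then show ?thesis by simp
    next
      case False
      then have "h \<in> (\<Union>p\<in>F. B p)" using h a1 by auto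
      then show ?thesis by simp
    qed
  qed
qed

theorem lemma3p6:
  fixes N :: "('n, 'c) monoid_scheme" and M :: "('m, 'e) monoid_scheme"
    and G :: "('g, 'd) monoid_scheme" and H :: "('h, 'f) monoid_scheme"
    and SH :: "'h set"
    and \<alpha> :: "('g \<Rightarrow> 'n) \<Rightarrow> ('h \<Rightarrow> 'm)" and \<beta> :: "'g \<Rightarrow> 'h" and Q :: real
  assumes "group N" "group M" "group G" "group H"
    and "finitely_generated N" "finitely_generated M" "finitely_generated G"
    and "fin_gen_set H SH"
    and "\<alpha> \<in> carrier (lamp N G) \<rightarrow> carrier (lamp M H)"
    and "\<beta> \<in> carrier G \<rightarrow> carrier H"
    and "Q \<ge> 0"
    and "\<And>c1 c2 p. c1 \<in> carrier (lamp N G) \<Longrightarrow> c2 \<in> carrier (lamp N G) \<Longrightarrow> p \<in> carrier G \<Longrightarrow>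
           csupp N G (inv\<^bsub>lamp N G\<^esub> c1 \<otimes>\<^bsub>lamp N G\<^esub> c2) \<subseteq> {p} \<Longrightarrow>
           csupp M H (inv\<^bsub>lamp M H\<^esub> (\<alpha> c1) \<otimes>\<^bsub>lamp M H\<^esub> \<alpha> c2) \<subseteq> wball H SH (\<beta> p) Q"
  shows "\<forall>A c. A \<subseteq> carrier G \<longrightarrow> finite A \<longrightarrow> c \<in> carrier (lamp N G) \<longrightarrow>
           \<alpha> ` (c <#\<^bsub>lamp N G\<^esub> lampL N G A)
             \<subseteq> \<alpha> c <#\<^bsub>lamp M H\<^esub> lampL M H (wnbhd H SH (\<beta> ` A) Q)"
  proof (intro allI impI subsetI)
  fix A c x
  assume A: "A \<subseteq> carrier G" "finite A" and c: "c \<in> carrier (lamp N G)"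
    and x: "x \<in> \<alpha> ` (c <#\<^bsub>lamp N G\<^esub> lampL N G A)"
  interpret LN: group "lamp N G" by (rule lamp_group[OF assms(1)])
  interpret LM: group "lamp M H" by (rule lamp_group[OF assms(2)])
  from x obtain l where l: "l \<in> lampL N G A" and xe: "x = \<alpha> (c \<otimes>\<^bsub>lamp N G\<^esub> l)"
    unfolding l_coset_def by auto
  define d where "d = c \<otimes>\<^bsub>lamp N G\<^esub> l"
  have lc: "l \<in> carrier (lamp N G)" using l by (simp add: lampL_def)
  have dc: "d \<in> carrier (lamp N G)" using lc c d_def by simp
  have "inv\<^bsub>lamp N G\<^esub> c \<otimes>\<^bsub>lamp N G\<^esub> d = l"
    using c lc d_def by (simp add: LN.m_assoc[symmetric])
  then have D: "{g \<in> carrier G. c g \<noteq> d g} \<subseteq> A"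
    using lamp_csupp_inv_mult[OF assms(1) c dc] l by (simp add: lampL_def)
  have hyp': "\<And>c1 c2 p. c1 \<in> carrier (lamp N G) \<Longrightarrow> c2 \<in> carrier (lamp N G) \<Longrightarrow> p \<in> carrier G \<Longrightarrow>
           {g \<in> carrier G. c1 g \<noteq> c2 g} \<subseteq> {p} \<Longrightarrow>
           {h \<in> carrier H. \<alpha> c1 h \<noteq> \<alpha> c2 h} \<subseteq> wball H SH (\<beta> p) Q"
  proof -
    fix c1 c2 p assume h: "c1 \<in> carrier (lamp N G)" "c2 \<in> carrier (lamp N G)" "p \<in> carrier G"
      "{g \<in> carrier G. c1 g \<noteq> c2 g} \<subseteq> {p}"
    have "\<alpha> c1 \<in> carrier (lamp M H)" "\<alpha> c2 \<in> carrier (lamp M H)" using h assms(9) by auto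
    then show "{h \<in> carrier H. \<alpha> c1 h \<noteq> \<alpha> c2 h} \<subseteq> wball H SH (\<beta> p) Q"
      using assms(12)[OF h(1-3)] h(4) lamp_csupp_inv_mult[OF assms(1) h(1,2)]
        lamp_csupp_inv_mult[OF assms(2) \<open>\<alpha> c1 \<in> _\<close> \<open>\<alpha> c2 \<in> _\<close>] by simp
  qed
  have K: "{h \<in> carrier H. \<alpha> c h \<noteq> \<alpha> d h} \<subseteq> (\<Union>p\<in>A. wball H SH (\<beta> p) Q)"
    using key[OF A(2) assms(9) hyp' A(1) c dc D] .
  have sub: "(\<Union>p\<in>A. wball H SH (\<beta> p) Q) \<subseteq> wnbhd H SH (\<beta> ` A) Q"
    unfolding wball_def wnbhd_def by auto
  have ac: "\<alpha> c \<in> carrier (lamp M H)" "\<alpha> d \<in> carrier (lamp M H)" using c dc assms(9) by auto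
  define l' where "l' = inv\<^bsub>lamp M H\<^esub> \<alpha> c \<otimes>\<^bsub>lamp M H\<^esub> \<alpha> d"
  have l'c: "l' \<in> carrier (lamp M H)" using ac l'_def by simp
  have "csupp M H l' \<subseteq> wnbhd H SH (\<beta> ` A) Q"
    using lamp_csupp_inv_mult[OF assms(2) ac] K sub l'_def by simp
  then have "l' \<in> lampL M H (wnbhd H SH (\<beta> ` A) Q)" using l'c by (simp add: lampL_def)
  moreover have "x = \<alpha> c \<otimes>\<^bsub>lamp M H\<^esub> l'"
    using ac xe d_def l'_def by (simp add: LM.m_assoc[symmetric])
  ultimately show "x \<in> \<alpha> c <#\<^bsub>lamp M H\<^esub> lampL M H (wnbhd H SH (\<beta> ` A) Q)"
    unfolding l_coset_def by auto
qed

end
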